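(* Let $D$ be a strongly connected digraph with at least two vertices. Then (a) $src^*(D)=1$ if and only if $rc^*(D)=1$, if and only if $D$ is the biorientation $\overleftrightarrow{K_n}$ of the complete graph $K_n$ for some $n\ge 2$; (b) $rc^*(D)=2$ if and only if $src^*(D)=2$.
   Context: All digraphs are finite, without loops or multiple arcs. For a strongly connected digraph $D$ and an arc-colouring $\Gamma:A(D)\to\{1,\dots,k\}$, a directed path is rainbow if no two of its arcs receive the same colour. $\Gamma$ is rainbow connected if for every ordered pair of distinct vertices $x,y$ there is a rainbow directed $xy$-path; $rc^*(D)$ is the minimum $k$ for which a rainbow connected arc-colouring with $k$ colours exists. $\Gamma$ is strongly rainbow connected if for every ordered pair of distinct vertices $x,y$ there is a rainbow directed $xy$-path of length $d_D(x,y)$; $src^*(D)$ is the minimum such $k$. The biorientation $\overleftrightarrow{G}$ of a graph $G$ is the digraph obtained by replacing each edge $uv$ by the two arcs $uv$ and $vu$. *)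

theory Defs
  imports Main
begin

definition digraph :: "'a set \<Rightarrow> ('a \<times> 'a) set \<Rightarrow> bool" where
  "digraph V A \<longleftrightarrow> finite V \<and> A \<subseteq> V \<times> V \<and> (\<forall>v. (v, v) \<notin> A)"

definition dpath :: "('a \<times> 'a) set \<Rightarrow> 'a \<Rightarrow> 'a \<Rightarrow> 'a list \<Rightarrow> bool" where
  "dpath A x y p \<longleftrightarrow> p \<noteq> [] \<and> hd p = x \<and> last p = y \<and> distinct p \<and>
     (\<forall>i. Suc i < length p \<longrightarrow> (p ! i, p ! Suc i) \<in> A)"

definition path_arcs :: "'a list \<Rightarrow> ('a \<times> 'a) list" where
  "path_arcs p = zip p (tl p)"

definition path_len :: "'a list \<Rightarrow> nat" where
  "path_len p = length p - 1"

definition strongly_connected :: "'a set \<Rightarrow> ('a \<times> 'a) set \<Rightarrow> bool" where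
  "strongly_connected V A \<longleftrightarrow> (\<forall>x\<in>V. \<forall>y\<in>V. \<exists>p. dpath A x y p)"

definition ddist :: "('a \<times> 'a) set \<Rightarrow> 'a \<Rightarrow> 'a \<Rightarrow> nat" where
  "ddist A x y = (LEAST n. \<exists>p. dpath A x y p \<and> path_len p = n)"

definition rainbow :: "('a \<times> 'a \<Rightarrow> nat) \<Rightarrow> 'a list \<Rightarrow> bool" where
  "rainbow \<Gamma> p \<longleftrightarrow> distinct (map \<Gamma> (path_arcs p))"

definition arc_colouring :: "('a \<times> 'a) set \<Rightarrow> nat \<Rightarrow> ('a \<times> 'a \<Rightarrow> nat) \<Rightarrow> bool" where
  "arc_colouring A k \<Gamma> \<longleftrightarrow> (\<forall>a\<in>A. \<Gamma> a \<in> {1..k})"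

definition rainbow_connected :: "'a set \<Rightarrow> ('a \<times> 'a) set \<Rightarrow> ('a \<times> 'a \<Rightarrow> nat) \<Rightarrow> bool" where
  "rainbow_connected V A \<Gamma> \<longleftrightarrow>
     (\<forall>x\<in>V. \<forall>y\<in>V. x \<noteq> y \<longrightarrow> (\<exists>p. dpath A x y p \<and> rainbow \<Gamma> p))"

definition strongly_rainbow_connected :: "'a set \<Rightarrow> ('a \<times> 'a) set \<Rightarrow> ('a \<times> 'a \<Rightarrow> nat) \<Rightarrow> bool" where
  "strongly_rainbow_connected V A \<Gamma> \<longleftrightarrow>
     (\<forall>x\<in>V. \<forall>y\<in>V. x \<noteq> y \<longrightarrow>
        (\<exists>p. dpath A x y p \<and> path_len p = ddist A x y \<and> rainbow \<Gamma> p))"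

definition rc :: "'a set \<Rightarrow> ('a \<times> 'a) set \<Rightarrow> nat" where
  "rc V A = (LEAST k. \<exists>\<Gamma>. arc_colouring A k \<Gamma> \<and> rainbow_connected V A \<Gamma>)"

definition src :: "'a set \<Rightarrow> ('a \<times> 'a) set \<Rightarrow> nat" where
  "src V A = (LEAST k. \<exists>\<Gamma>. arc_colouring A k \<Gamma> \<and> strongly_rainbow_connected V A \<Gamma>)"

definition complete_graph_edges :: "'a set \<Rightarrow> 'a set set" where
  "complete_graph_edges V = {{u, v} | u v. u \<in> V \<and> v \<in> V \<and> u \<noteq> v}"

definition biorientation :: "'a set set \<Rightarrow> ('a \<times> 'a) set" where
  "biorientation E = {(u, v). u \<noteq> v \<and> {u, v} \<in> E}"

end

theory Submission
  imports Defs
begin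

lemma arcs_in:
  assumes "dpath A x y p" "e \<in> set (path_arcs p)"
  shows "e \<in> A"
proof -
  from assms(2) have "\<exists>n. e = (p!n, tl p ! n) \<and> n < length p \<and> n < length (tl p)"
    unfolding path_arcs_def by (auto simp: in_set_zip prod_eq_iff) (metis)
  then obtain n where "e = (p!n, tl p ! n)" "n < length p" "n < length (tl p)" by blast
  then show ?thesis using assms(1) unfolding dpath_def by (auto simp: nth_tl)
qed

lemma len_le:
  assumes "dpath A x y p" "rainbow \<Gamma> p" "arc_colouring A k \<Gamma>"
  shows "path_len p \<le> k"
proof -
  have d: "distinct (map \<Gamma> (path_arcs p))" using assms(2) unfolding rainbow_def .
  have "set (map \<Gamma> (path_arcs p)) \<subseteq> {1..k}"
    using arcs_in[OF assms(1)] assms(3) unfolding arc_colouring_def by auto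
  then have "card (set (map \<Gamma> (path_arcs p))) \<le> k"
    using card_mono[OF finite_atLeastAtMost[of 1 k]] by fastforce
  moreover have "card (set (map \<Gamma> (path_arcs p))) = path_len p"
    using distinct_card[OF d] by (simp add: path_arcs_def path_len_def)
  ultimately show ?thesis by simp
qed

lemma len_ge:
  assumes "dpath A x y p" "x \<noteq> y"
  shows "path_len p \<ge> 1"
proof -
  have "length p \<ge> 2"
  proof (rule ccontr)
    assume "\<not> length p \<ge> 2"
    moreover have "p \<noteq> []" using assms(1) unfolding dpath_def by simp
    ultimately have "length p = 1" by (cases p) (auto simp: Suc_le_eq)
    then obtain a where "p = [a]" by (auto simp: length_Suc_conv)
    then show False using assms unfolding dpath_def by auto
  qed
  then show ?thesis unfolding path_len_def by simp
qed

lemma len_one: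
  assumes "dpath A x y p" "path_len p = 1"
  shows "(x, y) \<in> A"
proof -
  have "length p = 2" using assms(2) assms(1) unfolding path_len_def dpath_def
    by (cases p) auto
  then obtain a b where p: "p = [a, b]" by (auto simp: length_Suc_conv numeral_2_eq_2)
  have "(p!0, p!Suc 0) \<in> A" using assms(1) \<open>length p = 2\<close> unfolding dpath_def by simp
  moreover have "x = a" "y = b" using assms(1) p unfolding dpath_def by auto
  ultimately show ?thesis using p by simp
qed

lemma arc_path:
  assumes "(x, y) \<in> A" "x \<noteq> y"
  shows "dpath A x y [x, y]" "path_len [x, y] = 1" "rainbow \<Gamma> [x, y]"
  using assms unfolding dpath_def path_len_def rainbow_def path_arcs_def
  by (auto simp: less_Suc_eq)

lemma ddist_le:
  assumes "dpath A x y p"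
  shows "ddist A x y \<le> path_len p"
  unfolding ddist_def using assms by (intro Least_le) auto

lemma ddist_ex:
  assumes "dpath A x y p"
  shows "\<exists>q. dpath A x y q \<and> path_len q = ddist A x y"
proof -
  have "\<exists>n. \<exists>q. dpath A x y q \<and> path_len q = n" using assms by blast
  then show ?thesis unfolding ddist_def by (rule LeastI_ex)
qed

lemma ddist_arc:
  assumes "(x, y) \<in> A" "x \<noteq> y"
  shows "ddist A x y = 1"
proof -
  have "ddist A x y \<le> 1" using ddist_le[OF arc_path(1)[OF assms]] arc_path(2)[OF assms] by simp
  moreover obtain q where q: "dpath A x y q" "path_len q = ddist A x y"
    using ddist_ex[OF arc_path(1)[OF assms]] by blast
  then have "ddist A x y \<ge> 1" using len_ge[OF q(1) assms(2)] by simp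
  ultimately show ?thesis by simp
qed

lemma strong_imp:
  "strongly_rainbow_connected V A \<Gamma> \<Longrightarrow> rainbow_connected V A \<Gamma>"
  unfolding strongly_rainbow_connected_def rainbow_connected_def by blast

lemma exists_strong:
  assumes "digraph V A" "strongly_connected V A"
  shows "\<exists>k \<Gamma>. arc_colouring A k \<Gamma> \<and> strongly_rainbow_connected V A \<Gamma>"
proof -
  have "finite A" using assms(1) unfolding digraph_def by (meson finite_SigmaI finite_subset)
  then obtain f :: "'a \<times> 'a \<Rightarrow> nat" and n where f: "f ` A = {i. i < n}" "inj_on f A"
    using finite_imp_inj_to_nat_seg by blast
  define \<Gamma> where "\<Gamma> = (\<lambda>a. f a + 1)"
  have inj: "inj_on \<Gamma> A" using f(2) unfolding \<Gamma>_def inj_on_def by auto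
  have "f a < n" if "a \<in> A" for a
  proof -
    have "f a \<in> f ` A" using that by (rule imageI)
    then show ?thesis using f(1) by simp
  qed
  then have ac: "arc_colouring A n \<Gamma>" unfolding arc_colouring_def \<Gamma>_def by (auto simp: Suc_le_eq)
  have "strongly_rainbow_connected V A \<Gamma>"
    unfolding strongly_rainbow_connected_def
  proof (intro ballI impI)
    fix x y assume "x \<in> V" "y \<in> V" "x \<noteq> y"
    then obtain p where "dpath A x y p" using assms(2) unfolding strongly_connected_def by meson
    then obtain q where q: "dpath A x y q" "path_len q = ddist A x y" using ddist_ex[OF \<open>dpath A x y p\<close>] by blast
    have "distinct (path_arcs q)" using q(1) unfolding dpath_def path_arcs_def
      by (simp add: distinct_zipI1)
    moreover have "set (path_arcs q) \<subseteq> A" using arcs_in[OF q(1)] by blast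
    ultimately have "rainbow \<Gamma> q" unfolding rainbow_def
      using inj_on_subset[OF inj] by (simp add: distinct_map)
    then show "\<exists>p. dpath A x y p \<and> path_len p = ddist A x y \<and> rainbow \<Gamma> p" using q by blast
  qed
  then show ?thesis using ac by blast
qed

lemma two_strong:
  assumes "arc_colouring A 2 \<Gamma>" "rainbow_connected V A \<Gamma>"
  shows "strongly_rainbow_connected V A \<Gamma>"
  unfolding strongly_rainbow_connected_def
proof (intro ballI impI)
  fix x y assume xy: "x \<in> V" "y \<in> V" "x \<noteq> y"
  show "\<exists>p. dpath A x y p \<and> path_len p = ddist A x y \<and> rainbow \<Gamma> p"
  proof (cases "(x, y) \<in> A")
    case True
    have "dpath A x y [x, y]" "path_len [x, y] = ddist A x y" "rainbow \<Gamma> [x, y]"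
      using arc_path[OF True xy(3)] ddist_arc[OF True xy(3)] by simp_all
    then show ?thesis by blast
  next
    case False
    obtain p where p: "dpath A x y p" "rainbow \<Gamma> p"
      using assms(2) xy unfolding rainbow_connected_def by blast
    have "path_len p \<le> 2" using len_le[OF p assms(1)] .
    obtain q where q: "dpath A x y q" "path_len q = ddist A x y" using ddist_ex[OF p(1)] by blast
    have "path_len q \<ge> 1" using len_ge[OF q(1) xy(3)] .
    moreover have "path_len q \<noteq> 1" using len_one[OF q(1)] False by blast
    moreover have "path_len q \<le> path_len p" using ddist_le[OF p(1)] q(2) by simp
    moreover have "path_len p \<ge> 1" using len_ge[OF p(1) xy(3)] .
    moreover have "path_len p \<noteq> 1" using len_one[OF p(1)] False by blast
    ultimately have "path_len p = ddist A x y" using \<open>path_len p \<le> 2\<close> q(2) by simp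
    then show ?thesis using p by blast
  qed
qed

theorem theorem2:
  fixes V :: "'a set" and A :: "('a \<times> 'a) set"
  assumes "digraph V A" and "strongly_connected V A" and "card V \<ge> 2"
  shows "(src V A = 1 \<longleftrightarrow> rc V A = 1)
       \<and> (rc V A = 1 \<longleftrightarrow> (card V \<ge> 2 \<and> A = biorientation (complete_graph_edges V)))
       \<and> (rc V A = 2 \<longleftrightarrow> src V A = 2)"
proof -
  define Pr where "Pr k = (\<exists>\<Gamma>. arc_colouring A k \<Gamma> \<and> rainbow_connected V A \<Gamma>)" for k
  define Ps where "Ps k = (\<exists>\<Gamma>. arc_colouring A k \<Gamma> \<and> strongly_rainbow_connected V A \<Gamma>)" for k
  have exs: "\<exists>k. Ps k" using exists_strong[OF assms(1,2)] unfolding Ps_def by blast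
  have sr: "Ps k \<Longrightarrow> Pr k" for k unfolding Ps_def Pr_def using strong_imp by blast
  have exr: "\<exists>k. Pr k" using exs sr by blast
  have rcP: "Pr (rc V A)" unfolding rc_def Pr_def[symmetric] by (rule LeastI_ex[OF exr])
  have srcP: "Ps (src V A)" unfolding src_def Ps_def[symmetric] by (rule LeastI_ex[OF exs])
  have rcL: "Pr k \<Longrightarrow> rc V A \<le> k" for k unfolding rc_def Pr_def[symmetric] by (rule Least_le)
  have srcL: "Ps k \<Longrightarrow> src V A \<le> k" for k unfolding src_def Ps_def[symmetric] by (rule Least_le)
  obtain x y where xy: "x \<in> V" "y \<in> V" "x \<noteq> y"
  proof -
    have fin: "finite V" using assms(3) card.infinite by fastforce
    have "V \<noteq> {}" using assms(3) by auto
    then obtain z where z: "z \<in> V" by blast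
    have "card (V - {z}) \<ge> 1" using assms(3) z fin by (simp add: card_Diff_singleton)
    then have "V - {z} \<noteq> {}" by (cases "V - {z} = {}") auto
    then obtain w where "w \<in> V" "w \<noteq> z" by blast
    then show ?thesis using that z by blast
  qed
  have ge1: "Pr k \<Longrightarrow> k \<ge> 1" for k
  proof -
    assume "Pr k"
    then obtain \<Gamma> where g: "arc_colouring A k \<Gamma>" "rainbow_connected V A \<Gamma>" unfolding Pr_def by blast
    then obtain p where p: "dpath A x y p" "rainbow \<Gamma> p" using xy unfolding rainbow_connected_def by blast
    show ?thesis using len_le[OF p g(1)] len_ge[OF p(1) xy(3)] by simp
  qed
  define C where "C = (A = biorientation (complete_graph_edges V))"
  have compl: "Pr 1 \<Longrightarrow> C"
  proof -
    assume "Pr 1"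
    then obtain \<Gamma> where g: "arc_colouring A 1 \<Gamma>" "rainbow_connected V A \<Gamma>" unfolding Pr_def by blast
    have arc: "(u, v) \<in> A" if uv: "u \<in> V" "v \<in> V" "u \<noteq> v" for u v
    proof -
      obtain p where p: "dpath A u v p" "rainbow \<Gamma> p" using g(2) uv unfolding rainbow_connected_def by blast
      have "path_len p \<le> 1" using len_le[OF p g(1)] .
      moreover have "path_len p \<ge> 1" using len_ge[OF p(1) uv(3)] .
      ultimately show ?thesis using len_one[OF p(1)] by simp
    qed
    have "A \<subseteq> V \<times> V" "\<forall>v. (v, v) \<notin> A" using assms(1) unfolding digraph_def by auto
    then have av: "(u, v) \<in> A \<longleftrightarrow> u \<in> V \<and> v \<in> V \<and> u \<noteq> v" for u v using arc by blast
    have "(u, v) \<in> biorientation (complete_graph_edges V) \<longleftrightarrow> u \<in> V \<and> v \<in> V \<and> u \<noteq> v" for u v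
    proof
      assume "(u, v) \<in> biorientation (complete_graph_edges V)"
      then obtain a b where "u \<noteq> v" "{u, v} = {a, b}" "a \<in> V" "b \<in> V"
        unfolding biorientation_def complete_graph_edges_def by blast
      then show "u \<in> V \<and> v \<in> V \<and> u \<noteq> v" by (auto simp: doubleton_eq_iff)
    next
      assume "u \<in> V \<and> v \<in> V \<and> u \<noteq> v"
      then show "(u, v) \<in> biorientation (complete_graph_edges V)"
        unfolding biorientation_def complete_graph_edges_def by blast
    qed
    then show C unfolding C_def using av by auto
  qed
  have complr: "C \<Longrightarrow> Ps 1"
  proof -
    assume C
    have arc: "(u, v) \<in> A" if "u \<in> V" "v \<in> V" "u \<noteq> v" for u v
      using \<open>C\<close> that unfolding C_def biorientation_def complete_graph_edges_def by auto
    have "arc_colouring A 1 (\<lambda>_. 1)" unfolding arc_colouring_def by simp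
    moreover have "strongly_rainbow_connected V A (\<lambda>_. 1)"
      unfolding strongly_rainbow_connected_def
    proof (intro ballI impI)
      fix u v assume "u \<in> V" "v \<in> V" "u \<noteq> v"
      then have a: "(u, v) \<in> A" using arc by blast
      show "\<exists>p. dpath A u v p \<and> path_len p = ddist A u v \<and> rainbow (\<lambda>_. 1) p"
      proof (intro exI conjI)
        show "dpath A u v [u, v]" "rainbow (\<lambda>_. 1) [u, v]" using arc_path[OF a \<open>u \<noteq> v\<close>] by simp_all
        show "path_len [u, v] = ddist A u v" using arc_path(2)[OF a \<open>u \<noteq> v\<close>] ddist_arc[OF a \<open>u \<noteq> v\<close>] by simp
      qed
    qed
    ultimately show "Ps 1" unfolding Ps_def by blast
  qed
  have rge: "rc V A \<ge> 1" using ge1[OF rcP] .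
  have sge: "src V A \<ge> 1" using ge1[OF sr[OF srcP]] .
  have r1: "rc V A = 1 \<longleftrightarrow> C"
  proof
    assume "rc V A = 1" then show C using rcP compl by simp
  next
    assume C then have "rc V A \<le> 1" using rcL[OF sr[OF complr]] by simp
    then show "rc V A = 1" using rge by simp
  qed
  have s1: "src V A = 1 \<longleftrightarrow> C"
  proof
    assume "src V A = 1" then show C using srcP compl sr by simp
  next
    assume C then have "src V A \<le> 1" using srcL[OF complr] by simp
    then show "src V A = 1" using sge by simp
  qed
  have b: "rc V A = 2 \<longleftrightarrow> src V A = 2"
  proof
    assume h: "rc V A = 2"
    then obtain \<Gamma> where g2: "arc_colouring A 2 \<Gamma>" "rainbow_connected V A \<Gamma>" using rcP unfolding Pr_def by auto
    then have "Ps 2" unfolding Ps_def using two_strong[OF g2] by blast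
    then have "src V A \<le> 2" by (rule srcL)
    moreover have "src V A \<ge> 1" using sge .
    moreover have "src V A \<noteq> 1" using s1 r1 h by simp
    ultimately show "src V A = 2" by simp
  next
    assume h: "src V A = 2"
    then have "rc V A \<le> 2" using rcL[OF sr[OF srcP]] by simp
    moreover have "rc V A \<ge> 1" using rge .
    moreover have "rc V A \<noteq> 1" using s1 r1 h by simp
    ultimately show "rc V A = 2" by simp
  qed
  show ?thesis using r1 s1 b assms(3) unfolding C_def by blast
qed

end
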